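(* Fix integers $1\le a_1<a_2$, and let $\mathcal{A}$ be an infinite set of primes $n>2a_2$. Let $\{\mathcal{B}_n\}_{n\in\mathcal{A}}$ be any sequence where each $\mathcal{B}_n$ is a real orthonormal basis of $\mathbb{R}^n$ consisting of eigenvectors of $A(C_n(a_1,a_2))$. Then there exist $p\in(0,1)$, a sequence of vertex subsets $S_n\subset\{0,\dots,n-1\}$ with $\lim_{n\to\infty}|S_n|/n=p$, and a sequence of eigenvectors $\varphi_n\in\mathcal{B}_n$, such that $\mu_{\varphi_n}(S_n)$ does not converge to $p$ as $n\to\infty$, $n\in\mathcal{A}$.
   Context: A circulant graph $C_n(a_1,a_2)$, with integers $1\le a_1<a_2\le n/2$, has vertex set $V=\{0,1,\dots,n-1\}$, and $i\sim j$ if and only if $i-j\equiv \pm a_1$ or $\pm a_2 \pmod n$; it is 4-regular. Its adjacency matrix $A(C_n(a_1,a_2))$ is the $n\times n$ matrix with $A_{ij}=1$ if $i\sim j$ and $0$ otherwise. For a unit vector $\psi\in\mathbb{R}^n$, $\mu_\psi(S)=\sum_{v\in S}|\psi(v)|^2$ for $S\subset V$. *)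

theory Defs
  imports "HOL-Analysis.Analysis" "HOL-Number_Theory.Number_Theory"
begin

text \<open>Vectors of R^n are represented as functions nat => real; only the
  coordinates 0..n-1 are meaningful, and we require vectors to vanish
  outside {..<n} so that they are determined by their coordinates.\<close>

definition is_vec :: "nat \<Rightarrow> (nat \<Rightarrow> real) \<Rightarrow> bool" where
  "is_vec n v \<longleftrightarrow> (\<forall>i\<ge>n. v i = 0)"

definition circ_adj :: "nat \<Rightarrow> nat \<Rightarrow> nat \<Rightarrow> nat \<Rightarrow> nat \<Rightarrow> bool" where
  "circ_adj n a1 a2 i j \<longleftrightarrow>
     [int i - int j = int a1] (mod int n) \<or> [int i - int j = - int a1] (mod int n) \<or>
     [int i - int j = int a2] (mod int n) \<or> [int i - int j = - int a2] (mod int n)"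

definition circ_matrix :: "nat \<Rightarrow> nat \<Rightarrow> nat \<Rightarrow> nat \<Rightarrow> nat \<Rightarrow> real" where
  "circ_matrix n a1 a2 i j = (if circ_adj n a1 a2 i j then 1 else 0)"

definition is_eigvec :: "nat \<Rightarrow> (nat \<Rightarrow> nat \<Rightarrow> real) \<Rightarrow> (nat \<Rightarrow> real) \<Rightarrow> bool" where
  "is_eigvec n M v \<longleftrightarrow> is_vec n v \<and> (\<exists>i<n. v i \<noteq> 0) \<and>
     (\<exists>ev::real. \<forall>i<n. (\<Sum>j<n. M i j * v j) = ev * v i)"

definition is_onb :: "nat \<Rightarrow> (nat \<Rightarrow> real) set \<Rightarrow> bool" where
  "is_onb n B \<longleftrightarrow> finite B \<and> (\<forall>b\<in>B. is_vec n b) \<and>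
     (\<forall>b\<in>B. (\<Sum>i<n. (b i)\<^sup>2) = 1) \<and>
     (\<forall>b\<in>B. \<forall>b'\<in>B. b \<noteq> b' \<longrightarrow> (\<Sum>i<n. b i * b' i) = 0) \<and>
     (\<forall>v. is_vec n v \<longrightarrow> (\<exists>c. \<forall>i<n. v i = (\<Sum>b\<in>B. c b * b i)))"

definition mu :: "(nat \<Rightarrow> real) \<Rightarrow> nat set \<Rightarrow> real" where
  "mu \<psi> S = (\<Sum>v\<in>S. \<bar>\<psi> v\<bar>\<^sup>2)"

end

theory Submission
  imports Defs
begin


definition nbr :: "nat \<Rightarrow> int \<Rightarrow> nat \<Rightarrow> nat" where
  "nbr n c v = nat ((int v + c) mod int n)"

lemma nbr_lt: "0 < n \<Longrightarrow> nbr n c v < n"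
  unfolding nbr_def by (simp add: nat_less_iff)

lemma int_nbr: "0 < n \<Longrightarrow> int (nbr n c v) = (int v + c) mod int n"
  unfolding nbr_def by simp

lemma nbr_nbr: "0 < n \<Longrightarrow> v < n \<Longrightarrow> nbr n (-c) (nbr n c v) = v"
proof -
  assume n: "0 < n" and v: "v < n"
  have "int (nbr n (-c) (nbr n c v)) = ((int v + c) mod int n - c) mod int n"
    using n by (simp add: int_nbr)
  also have "\<dots> = int v mod int n" by (simp add: mod_diff_left_eq)
  also have "\<dots> = int v" using v by simp
  finally show ?thesis by simp
qed

lemma sum_shift: "0 < n \<Longrightarrow> (\<Sum>v<n. f (nbr n c v)) = (\<Sum>v<(n::nat). (f v :: real))"
  apply (rule sum.reindex_bij_witness[where i="nbr n (-c)" and j="nbr n c"])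
  using nbr_nbr[of n _ c] nbr_nbr[of n _ "-c"] nbr_lt[of n] by auto

lemma nbr_pos: "0 < n \<Longrightarrow> nbr n (int a) v = (v + a) mod n"
  proof -
  have "(int v + int a) mod int n = int ((v + a) mod n)" by (simp add: zmod_int)
  thus ?thesis unfolding nbr_def by simp
qed

lemma cong_nbr: "0 < n \<Longrightarrow> j < n \<Longrightarrow> [int i - int j = c] (mod int n) \<longleftrightarrow> j = nbr n (-c) i"
proof -
  assume n: "0 < n" and j: "j < n"
  have "j = nbr n (-c) i \<longleftrightarrow> int j = (int i - c) mod int n"
  proof -
    have "j = nbr n (-c) i \<longleftrightarrow> int j = int (nbr n (-c) i)" by (rule of_nat_eq_iff[symmetric])
    thus ?thesis using int_nbr[OF n, of "-c" i] by simp
  qed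
  also have "\<dots> \<longleftrightarrow> int j mod int n = (int i - c) mod int n" using j by simp
  also have "\<dots> \<longleftrightarrow> [int i - int j = c] (mod int n)"
  proof -
    have e1: "int j mod int n = (int i - c) mod int n \<longleftrightarrow> int n dvd (int j - (int i - c))" by (rule mod_eq_dvd_iff)
    have e2: "[int i - int j = c] (mod int n) \<longleftrightarrow> int n dvd (int i - int j - c)" by (simp add: cong_def mod_eq_dvd_iff)
    have "int j - (int i - c) = - (int i - int j - c)" by simp
    thus ?thesis using e1 e2 by (simp only: dvd_minus_iff)
  qed
  finally show ?thesis by simp
qed

lemma nbr_neq: "0 < n \<Longrightarrow> 0 < \<bar>c - c'\<bar> \<Longrightarrow> \<bar>c - c'\<bar> < int n \<Longrightarrow> nbr n c i \<noteq> nbr n c' i"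
proof
  assume n: "0 < n" and h1: "0 < \<bar>c - c'\<bar>" and h2: "\<bar>c - c'\<bar> < int n" and e: "nbr n c i = nbr n c' i"
  hence "(int i + c) mod int n = (int i + c') mod int n" using int_nbr[OF n] by metis
  hence "int n dvd (int i + c) - (int i + c')" by (simp add: mod_eq_dvd_iff)
  hence "int n dvd (c - c')" by simp
  hence "int n dvd \<bar>c - c'\<bar>" by simp
  then show False using h1 h2 by (meson zdvd_not_zless)
qed



definition Nx :: "nat \<Rightarrow> nat \<Rightarrow> nat \<Rightarrow> (nat \<Rightarrow> real) \<Rightarrow> nat \<Rightarrow> real" where
  "Nx n a1 a2 x i = x (nbr n (int a1) i) + x (nbr n (- int a1) i) + x (nbr n (int a2) i) + x (nbr n (- int a2) i)"

lemma row_set: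
  assumes "1 \<le> a1" "a1 < a2" "2 * a2 < n" 
  shows "{j \<in> {..<n}. circ_adj n a1 a2 i j} = {nbr n (int a1) i, nbr n (- int a1) i, nbr n (int a2) i, nbr n (- int a2) i}"
proof -
  have n: "0 < n" using assms by simp
  have k: "circ_adj n a1 a2 i j \<longleftrightarrow> j \<in> {nbr n (int a1) i, nbr n (- int a1) i, nbr n (int a2) i, nbr n (- int a2) i}" if j: "j < n" for j
    unfolding circ_adj_def using cong_nbr[OF n j] by auto
  show ?thesis using k nbr_lt[OF n] by auto
qed

lemma row_sum:
  assumes "1 \<le> a1" "a1 < a2" "2 * a2 < n"
  shows "(\<Sum>j<n. circ_matrix n a1 a2 i j * x j) = Nx n a1 a2 x i"
proof -
  have n: "0 < n" using assms by simp
  have "(\<Sum>j<n. circ_matrix n a1 a2 i j * x j) = (\<Sum>j<n. if circ_adj n a1 a2 i j then x j else 0)"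
    by (rule sum.cong) (auto simp: circ_matrix_def)
  also have "\<dots> = (\<Sum>j\<in>{j \<in> {..<n}. circ_adj n a1 a2 i j}. x j)"
    by (rule sum.inter_filter[symmetric]) simp
  also have "\<dots> = (\<Sum>j\<in>{nbr n (int a1) i, nbr n (- int a1) i, nbr n (int a2) i, nbr n (- int a2) i}. x j)"
    using row_set[OF assms] by simp
  also have "\<dots> = Nx n a1 a2 x i"
  proof -
    have d: "\<And>c c'. 0 < \<bar>c - c'\<bar> \<Longrightarrow> \<bar>c - c'\<bar> < int n \<Longrightarrow> nbr n c i \<noteq> nbr n c' i"
      using nbr_neq[OF n] by blast
    have d1: "nbr n (int a1) i \<noteq> nbr n (- int a1) i" by (rule d) (use assms in auto)
    have d2: "nbr n (int a1) i \<noteq> nbr n (int a2) i" by (rule d) (use assms in auto)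
    have d3: "nbr n (int a1) i \<noteq> nbr n (- int a2) i" by (rule d) (use assms in auto)
    have d4: "nbr n (- int a1) i \<noteq> nbr n (int a2) i" by (rule d) (use assms in auto)
    have d5: "nbr n (- int a1) i \<noteq> nbr n (- int a2) i" by (rule d) (use assms in auto)
    have d6: "nbr n (int a2) i \<noteq> nbr n (- int a2) i" by (rule d) (use assms in auto)
    show ?thesis unfolding Nx_def using d1 d2 d3 d4 d5 d6 by (simp add: add.assoc)
  qed
  finally show ?thesis .
qed

lemma cross_sum:
  fixes x :: "nat \<Rightarrow> real"
  assumes n: "0 < n"
  shows "(\<Sum>v<n. x v * x (nbr n (- c) v)) = (\<Sum>v<n. x v * x (nbr n c v))"
proof -
  have "(\<Sum>v<n. x v * x (nbr n (- c) v)) = (\<Sum>v<n. x (nbr n c v) * x (nbr n (- c) (nbr n c v)))"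
    by (rule sum_shift[OF n, symmetric])
  also have "\<dots> = (\<Sum>v<n. x v * x (nbr n c v))"
    by (rule sum.cong) (auto simp: nbr_nbr[OF n])
  finally show ?thesis .
qed

lemma sq_sum:
  fixes x :: "nat \<Rightarrow> real"
  assumes n: "0 < n"
  shows "(\<Sum>v<n. (x v - x (nbr n c v))\<^sup>2) = 2 * (\<Sum>v<n. x v * x v) - 2 * (\<Sum>v<n. x v * x (nbr n c v))"
proof -
  have "(\<Sum>v<n. (x v - x (nbr n c v))\<^sup>2) = (\<Sum>v<n. x v * x v) - 2 * (\<Sum>v<n. x v * x (nbr n c v)) + (\<Sum>v<n. x (nbr n c v) * x (nbr n c v))"
    by (simp add: power2_eq_square algebra_simps sum.distrib sum_subtractf sum_distrib_left)
  also have "(\<Sum>v<n. x (nbr n c v) * x (nbr n c v)) = (\<Sum>v<n. x v * x v)"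
    by (rule sum_shift[OF n])
  finally show ?thesis by simp
qed

lemma quad_id:
  assumes n: "0 < n"
  shows "(\<Sum>v<n. x v * (4 * x v - Nx n a1 a2 x v)) =
     (\<Sum>v<n. (x v - x (nbr n (int a1) v))\<^sup>2) + (\<Sum>v<n. (x v - x (nbr n (int a2) v))\<^sup>2)"
proof -
  have "(\<Sum>v<n. x v * (4 * x v - Nx n a1 a2 x v)) = 4 * (\<Sum>v<n. x v * x v)
     - (\<Sum>v<n. x v * x (nbr n (int a1) v)) - (\<Sum>v<n. x v * x (nbr n (- int a1) v))
     - (\<Sum>v<n. x v * x (nbr n (int a2) v)) - (\<Sum>v<n. x v * x (nbr n (- int a2) v))"
    unfolding Nx_def by (simp add: algebra_simps sum.distrib sum_subtractf sum_distrib_left)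
  then show ?thesis using cross_sum[OF n, of x "int a1"] cross_sum[OF n, of x "int a2"]
    sq_sum[OF n, of x "int a1"] sq_sum[OF n, of x "int a2"] by simp
qed

lemma col_sum:
  assumes n: "0 < n"
  shows "(\<Sum>v<n. Nx n a1 a2 x v) = 4 * (\<Sum>v<n. x v)"
  unfolding Nx_def by (simp add: sum.distrib sum_shift[OF n])



definition tent :: "nat \<Rightarrow> nat \<Rightarrow> real" where
  "tent n v = (if v < n then real (min v (n - v)) else 0)"

lemma S1: "(\<Sum>w\<le>k. real w) = real k * (real k + 1) / 2"
  by (induction k) (auto simp: field_simps)

lemma S2: "(\<Sum>w\<le>k. (real w)\<^sup>2) = real k * (real k + 1) * (2 * real k + 1) / 6"
  by (induction k) (auto simp: field_simps power2_eq_square)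

lemma tent_split:
  fixes F :: "real \<Rightarrow> real"
  assumes F0: "F 0 = 0"
  shows "(\<Sum>v<2*k+1. F (tent (2*k+1) v)) = 2 * (\<Sum>w\<le>k. F (real w))"
proof -
  have U: "{..<2*k+1} = {..k} \<union> {k+1..2*k}" by auto
  have D: "{..k} \<inter> {k+1..2*k} = {}" by auto
  have "(\<Sum>v<2*k+1. F (tent (2*k+1) v)) = (\<Sum>v\<le>k. F (tent (2*k+1) v)) + (\<Sum>v\<in>{k+1..2*k}. F (tent (2*k+1) v))"
    unfolding U by (rule sum.union_disjoint) (use D in auto)
  also have "(\<Sum>v\<le>k. F (tent (2*k+1) v)) = (\<Sum>w\<le>k. F (real w))"
    by (rule sum.cong) (auto simp: tent_def)
  also have "(\<Sum>v\<in>{k+1..2*k}. F (tent (2*k+1) v)) = (\<Sum>w\<in>{1..k}. F (real w))"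
    apply (rule sum.reindex_bij_witness[where i="\<lambda>w. 2*k+1-w" and j="\<lambda>w. 2*k+1-w"])
    by (auto simp: tent_def)
  also have "(\<Sum>w\<in>{1..k}. F (real w)) = (\<Sum>w\<le>k. F (real w))"
  proof -
    have "{..k} = insert 0 {1..k}" by auto
    thus ?thesis using F0 by simp
  qed
  finally show ?thesis by simp
qed

lemma tent_sum: "(\<Sum>v<2*k+1. tent (2*k+1) v) = real k * (real k + 1)"
  using tent_split[of "\<lambda>x. x" k] S1[of k] by simp

lemma tent_sum2: "(\<Sum>v<2*k+1. (tent (2*k+1) v)\<^sup>2) = real k * (real k + 1) * (2 * real k + 1) / 3"
  using tent_split[of "\<lambda>x. x\<^sup>2" k] S2[of k] by simp

lemma tent_var:
  assumes "1 \<le> k"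
  shows "(\<Sum>v<2*k+1. (tent (2*k+1) v)\<^sup>2) - (\<Sum>v<2*k+1. tent (2*k+1) v)\<^sup>2 / real (2*k+1)
     \<ge> real (2*k+1) ^ 3 / 64"
proof -
  define x where "x = real k"
  have x: "1 \<le> x" using assms x_def by simp
  have "x * (x + 1) * (2 * x + 1) / 3 - (x * (x+1))\<^sup>2 / (2*x+1) \<ge> (2*x+1)^3/64"
  proof -
    have p: "0 < 2*x+1" using x by simp
    have "64 * (x * (x + 1) * (x*x+x+1)) \<ge> 3 * (2*x+1)^4"
      using x by (simp add: power4_eq_xxxx algebra_simps) (smt (verit) mult_nonneg_nonneg mult_left_mono)
    moreover have "x * (x + 1) * (2 * x + 1) / 3 - (x * (x+1))\<^sup>2 / (2*x+1) = x * (x + 1) * (x*x+x+1) / (3*(2*x+1))"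
      using p by (simp add: field_simps power2_eq_square)
    ultimately show ?thesis using p by (simp add: field_simps power4_eq_xxxx power3_eq_cube)
  qed
  moreover have "real (2*k+1) = 2*x+1" unfolding x_def by simp
  ultimately show ?thesis unfolding tent_sum tent_sum2 by (simp only: x_def)
qed

lemma tent_lip:
  assumes "v < n" "a \<le> n"
  shows "\<bar>tent n v - tent n ((v + a) mod n)\<bar> \<le> real a"
proof (cases "v + a < n")
  case True
  then show ?thesis using assms by (auto simp: tent_def min_def)
next
  case False
  then have e: "(v + a) mod n = v + a - n" using assms by (simp add: mod_if)
  have "(v+a) mod n < n" using assms by simp
  then show ?thesis using assms False unfolding e tent_def by (auto simp: min_def)
qed



lemma mul_cancel:
  fixes n a1 x y :: nat
  assumes p: "prime n" and a: "0 < a1" "a1 < n" and e: "(x * a1) mod n = (y * a1) mod n"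
  shows "x mod n = y mod n"
proof -
  have "\<not> n dvd a1" using a nat_dvd_not_less by blast
  hence "coprime n a1" using p prime_imp_coprime by blast
  hence c: "coprime a1 n" by (simp add: coprime_commute)
  have "[x * a1 = y * a1] (mod n)" using e by (simp add: cong_def)
  hence "[x = y] (mod n)" using cong_mult_rcancel_nat[OF c] by simp
  thus ?thesis by (simp add: cong_def)
qed

lemma mul_bij:
  fixes n a1 :: nat
  assumes p: "prime n" and a: "0 < a1" "a1 < n"
  shows "bij_betw (\<lambda>k. (k * a1) mod n) {..<n} {..<n}"
proof -
  have n: "0 < n" using a by linarith
  have inj: "inj_on (\<lambda>k. (k * a1) mod n) {..<n}"
  proof (rule inj_onI)
    fix x y assume x: "x \<in> {..<n}" and y: "y \<in> {..<n}" and e: "(x * a1) mod n = (y * a1) mod n"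
    have "x mod n = y mod n" by (rule mul_cancel[OF p a e])
    thus "x = y" using x y by simp
  qed
  have sub: "(\<lambda>k. (k * a1) mod n) ` {..<n} \<subseteq> {..<n}" using n by (auto intro: mod_less_divisor)
  have "(\<lambda>k. (k * a1) mod n) ` {..<n} = {..<n}" by (rule endo_inj_surj[OF _ sub inj]) simp
  thus ?thesis using inj by (simp add: bij_betw_def)
qed

lemma window:
  fixes b :: "nat \<Rightarrow> real" and n a1 m :: nat
  assumes p: "prime n" and a: "0 < a1" "a1 < n"
    and s0: "(\<Sum>v<n. b v) = 0" and s1: "(\<Sum>v<n. (b v)\<^sup>2) = 1" and mn: "m \<le> n"
  shows "\<exists>S. S \<subseteq> {..<n} \<and> card S = m \<and>
     mu b S \<le> 4 * real m * real m * (\<Sum>v<n. (b v - b ((v + a1) mod n))\<^sup>2)"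
proof -
  have n: "0 < n" using a by linarith
  define D where "D = (\<Sum>v<n. (b v - b ((v + a1) mod n))\<^sup>2)"
  define \<psi> where "\<psi> t = b ((t * a1) mod n)" for t
  define d where "d t = \<psi> (Suc t) - \<psi> t" for t
  have bij: "bij_betw (\<lambda>k. (k * a1) mod n) {..<n} {..<n}" by (rule mul_bij[OF p a])
  have psi_mod: "\<psi> (t mod n) = \<psi> t" for t
    unfolding \<psi>_def by (simp add: mod_mult_left_eq)
  have d_mod: "d (t mod n) = d t" for t
  proof -
    have "\<psi> (Suc (t mod n)) = \<psi> (Suc t)"
      using psi_mod[of "Suc (t mod n)"] psi_mod[of "Suc t"] by (simp add: mod_Suc_eq)
    thus ?thesis unfolding d_def using psi_mod by simp
  qed
  have sum_psi: "(\<Sum>t<n. f (\<psi> t)) = (\<Sum>v<n. f (b v))" for f :: "real \<Rightarrow> real"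
    unfolding \<psi>_def using sum.reindex_bij_betw[OF bij, of "\<lambda>v. f (b v)"] by simp
  have d_eq: "d t = b (((t * a1) mod n + a1) mod n) - b ((t * a1) mod n)" for t
  proof -
    have "Suc t * a1 = t * a1 + a1" by simp
    hence "(Suc t * a1) mod n = ((t * a1) mod n + a1) mod n" by (simp only: mod_add_left_eq)
    thus ?thesis unfolding d_def \<psi>_def by simp
  qed
  have sum_d: "(\<Sum>t<n. (d t)\<^sup>2) = D"
  proof -
    have "(\<Sum>t<n. (d t)\<^sup>2) = (\<Sum>t<n. (b (((t * a1) mod n + a1) mod n) - b ((t * a1) mod n))\<^sup>2)"
      by (simp add: d_eq)
    also have "\<dots> = (\<Sum>v<n. (b ((v + a1) mod n) - b v)\<^sup>2)"
      using sum.reindex_bij_betw[OF bij, of "\<lambda>v. (b ((v + a1) mod n) - b v)\<^sup>2"] by simp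
    also have "\<dots> = D" unfolding D_def by (simp add: power2_commute)
    finally show ?thesis .
  qed
  have win: "(\<Sum>i<m. (d (t + i))\<^sup>2) \<le> D" for t
  proof -
    have "(\<Sum>i<m. (d (t + i))\<^sup>2) \<le> (\<Sum>i<n. (d (t + i))\<^sup>2)"
      by (rule sum_mono2) (use mn in auto)
    also have "\<dots> = (\<Sum>i<n. (d (nbr n (int t) i))\<^sup>2)"
      by (rule sum.cong) (auto simp: nbr_pos[OF n] d_mod add.commute)
    also have "\<dots> = (\<Sum>i<n. (d i)\<^sup>2)" by (rule sum_shift[OF n])
    finally show ?thesis using sum_d by simp
  qed
  have psi_per: "\<psi> (t + n * c) = \<psi> t" for t c
    using psi_mod[of "t + n * c"] psi_mod[of t] by simp
  have sign: "\<exists>t. \<psi> t \<le> 0 \<and> 0 < \<psi> (Suc t)"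
  proof (rule ccontr)
    assume "\<not> ?thesis"
    hence step: "\<psi> t \<le> 0 \<Longrightarrow> \<psi> (Suc t) \<le> 0" for t by force
    have "\<exists>t1<n. \<psi> t1 \<le> 0"
    proof (rule ccontr)
      assume "\<not> ?thesis"
      hence "\<forall>t<n. 0 < \<psi> t" by force
      hence "0 < (\<Sum>t<n. \<psi> t)" using n by (intro sum_pos) auto
      thus False using sum_psi[of "\<lambda>x. x"] s0 by simp
    qed
    then obtain t1 where t1: "\<psi> t1 \<le> 0" by blast
    have all: "\<psi> (t1 + k) \<le> 0" for k
      by (induction k) (use t1 step in auto)
    have nonpos: "\<psi> t \<le> 0" for t
    proof -
      have "t1 \<le> n * t1" using n by simp
      hence "t + n * t1 = t1 + (t + n * t1 - t1)" by linarith
      hence "\<psi> (t + n * t1) = \<psi> (t1 + (t + n * t1 - t1))" by simp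
      hence "\<psi> (t + n * t1) \<le> 0" using all[of "t + n * t1 - t1"] by simp
      thus ?thesis using psi_per by simp
    qed
    have "(\<Sum>t<n. - \<psi> t) = 0" using sum_psi[of "\<lambda>x. x"] s0 by (simp add: sum_negf)
    hence z: "\<forall>t\<in>{..<n}. - \<psi> t = 0" using nonpos by (subst sum_nonneg_eq_0_iff[symmetric]) auto
    have "(\<Sum>t<n. (\<psi> t)\<^sup>2) = 0" using z by simp
    thus False using sum_psi[of "\<lambda>x. x\<^sup>2"] s1 by simp
  qed
  then obtain t where t: "\<psi> t \<le> 0" "0 < \<psi> (Suc t)" by blast
  define T where "T = (\<Sum>i<m. \<bar>d (t + i)\<bar>)"
  have tele: "\<psi> (t + j) = \<psi> t + (\<Sum>i<j. d (t + i))" for j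
    by (induction j) (auto simp: d_def)
  have bnd: "(\<psi> (t + j))\<^sup>2 \<le> 4 * real m * D" if j: "j < m" for j
  proof -
    have h0: "\<bar>\<psi> t\<bar> \<le> \<bar>d t\<bar>" using t unfolding d_def by simp
    have h1: "\<bar>d t\<bar> \<le> T" unfolding T_def
      using member_le_sum[of 0 "{..<m}" "\<lambda>i. \<bar>d (t + i)\<bar>"] j by simp
    have h2: "\<bar>\<Sum>i<j. d (t + i)\<bar> \<le> T"
    proof -
      have "\<bar>\<Sum>i<j. d (t + i)\<bar> \<le> (\<Sum>i<j. \<bar>d (t + i)\<bar>)" by (rule sum_abs)
      also have "\<dots> \<le> T" unfolding T_def by (rule sum_mono2) (use j in auto)
      finally show ?thesis .
    qed
    have "\<bar>\<psi> (t + j)\<bar> \<le> 2 * T" using h0 h1 h2 tele[of j] by simp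
    moreover have "0 \<le> T" unfolding T_def by (rule sum_nonneg) simp
    ultimately have "\<bar>\<psi> (t + j)\<bar> \<le> \<bar>2 * T\<bar>" by simp
    hence "(\<psi> (t + j))\<^sup>2 \<le> (2 * T)\<^sup>2" by (simp only: abs_le_square_iff)
    also have "\<dots> = 4 * T\<^sup>2" by (simp add: power2_eq_square)
    also have "T\<^sup>2 \<le> (\<Sum>i<m. (\<bar>d (t + i)\<bar>)\<^sup>2) * real m"
      unfolding T_def using sum_squared_le_sum_of_squares[of "\<lambda>i. \<bar>d (t + i)\<bar>" "{..<m}"] by simp
    also have "\<dots> \<le> D * real m" using win[of t] by (intro mult_right_mono) auto
    finally show ?thesis by (simp add: mult_ac)
  qed
  define S where "S = (\<lambda>j. ((t + j) * a1) mod n) ` {..<m}"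
  have inj: "inj_on (\<lambda>j. ((t + j) * a1) mod n) {..<m}"
  proof (rule inj_onI)
    fix j j' assume j: "j \<in> {..<m}" "j' \<in> {..<m}" and e: "((t + j) * a1) mod n = ((t + j') * a1) mod n"
    have "(t + j) mod n = (t + j') mod n" by (rule mul_cancel[OF p a e])
    hence "[t + j = t + j'] (mod n)" by (simp add: cong_def)
    hence "[j = j'] (mod n)" by (simp add: cong_add_lcancel_nat)
    thus "j = j'" using j mn by (simp add: cong_def)
  qed
  have "S \<subseteq> {..<n}" unfolding S_def using n by auto
  moreover have "card S = m" unfolding S_def using card_image[OF inj] by simp
  moreover have "mu b S \<le> 4 * real m * real m * D"
  proof -
    have "mu b S = (\<Sum>j<m. \<bar>b (((t + j) * a1) mod n)\<bar>\<^sup>2)"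
      unfolding mu_def S_def by (simp add: sum.reindex[OF inj])
    also have "\<dots> = (\<Sum>j<m. (\<psi> (t + j))\<^sup>2)" unfolding \<psi>_def by simp
    also have "\<dots> \<le> (\<Sum>j<m. 4 * real m * D)" by (rule sum_mono) (use bnd in auto)
    also have "\<dots> = 4 * real m * real m * D" by simp
    finally show ?thesis .
  qed
  ultimately show ?thesis unfolding D_def by blast
qed



lemma sum_const2:
  fixes b b' :: "nat \<Rightarrow> real" and h :: "real \<Rightarrow> real \<Rightarrow> real"
  assumes "\<forall>v<n. b v = b 0" "\<forall>v<n. b' v = b' 0"
  shows "(\<Sum>i<n. h (b i) (b' i)) = real n * h (b 0) (b' 0)"
proof -
  have "(\<Sum>i<n. h (b i) (b' i)) = (\<Sum>i<n. h (b 0) (b' 0))"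
  proof (rule sum.cong)
    fix x assume "x \<in> {..<n}"
    hence "x < n" by simp
    hence "b x = b 0" "b' x = b' 0" using assms by blast+
    thus "h (b x) (b' x) = h (b 0) (b' 0)" by simp
  qed simp
  thus ?thesis by simp
qed

lemma per_n:
  fixes a1 a2 n q :: nat and B :: "(nat \<Rightarrow> real) set"
  assumes a1: "1 \<le> a1" and a12: "a1 < a2" and p: "prime n" and na: "2 * a2 < n"
    and onb: "is_onb n B" and eig: "\<forall>b\<in>B. is_eigvec n (circ_matrix n a1 a2) b" and q: "0 < q"
  shows "\<exists>S \<phi>. S \<subseteq> {..<n} \<and> \<phi> \<in> B \<and> card S = n div q \<and>
     mu \<phi> S \<le> 4 * (64 * (real a1 ^ 2 + real a2 ^ 2)) / (real q)\<^sup>2"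
proof -
  have n: "0 < n" using na by linarith
  have a1n: "0 < a1" "a1 < n" using a1 a12 na by linarith+
  define K where "K = 64 * (real a1 ^ 2 + real a2 ^ 2)"
  define Q where "Q x = (\<Sum>v<n. x v * (4 * x v - Nx n a1 a2 x v))" for x
  define D where "D x = (\<Sum>v<n. (x v - x (nbr n (int a1) v))\<^sup>2)" for x :: "nat \<Rightarrow> real"
  have finB: "finite B" using onb unfolding is_onb_def by blast
  have vecB: "\<And>b. b \<in> B \<Longrightarrow> is_vec n b" using onb unfolding is_onb_def by blast
  have normB: "\<And>b. b \<in> B \<Longrightarrow> (\<Sum>i<n. (b i)\<^sup>2) = 1" using onb unfolding is_onb_def by blast
  have orthB: "\<And>b b'. b \<in> B \<Longrightarrow> b' \<in> B \<Longrightarrow> b \<noteq> b' \<Longrightarrow> (\<Sum>i<n. b i * b' i) = 0"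
    using onb unfolding is_onb_def by blast
  have ipB: "(\<Sum>i<n. b' i * b i) = (if b' = b then 1 else 0)" if "b \<in> B" "b' \<in> B" for b b'
    using normB[of b] orthB[of b' b] that by (auto simp: power2_eq_square)
  have DQ: "0 \<le> D x \<and> D x \<le> Q x" for x
  proof -
    have "Q x = D x + (\<Sum>v<n. (x v - x (nbr n (int a2) v))\<^sup>2)"
      unfolding Q_def D_def by (rule quad_id[OF n])
    moreover have "0 \<le> (\<Sum>v<n. (x v - x (nbr n (int a2) v))\<^sup>2)" by (rule sum_nonneg) simp
    moreover have "0 \<le> D x" unfolding D_def by (rule sum_nonneg) simp
    ultimately show ?thesis by simp
  qed
  have eigQ: "Nx n a1 a2 b i = (4 - Q b) * b i" if b: "b \<in> B" and i: "i < n" for b i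
  proof -
    obtain ev where ev: "\<forall>i<n. (\<Sum>j<n. circ_matrix n a1 a2 i j * b j) = ev * b i"
      using eig b unfolding is_eigvec_def by blast
    have N: "\<And>i. i < n \<Longrightarrow> Nx n a1 a2 b i = ev * b i"
      using ev row_sum[OF a1 a12 na] by simp
    have "Q b = (\<Sum>v<n. (4 - ev) * (b v)\<^sup>2)"
      unfolding Q_def by (rule sum.cong) (auto simp: N power2_eq_square algebra_simps)
    also have "\<dots> = 4 - ev" using normB[OF b] by (simp add: sum_distrib_left[symmetric])
    finally show ?thesis using N[OF i] by simp
  qed
  have sum0: "(\<Sum>v<n. b v) = 0" if b: "b \<in> B" and Qb: "Q b \<noteq> 0" for b
  proof -
    have "4 * (\<Sum>v<n. b v) = (\<Sum>v<n. Nx n a1 a2 b v)" by (rule col_sum[OF n, symmetric])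
    also have "\<dots> = (\<Sum>v<n. (4 - Q b) * b v)" by (rule sum.cong) (auto simp: eigQ[OF b])
    also have "\<dots> = (4 - Q b) * (\<Sum>v<n. b v)" by (simp add: sum_distrib_left)
    finally have "Q b * (\<Sum>v<n. b v) = 0" by (simp add: algebra_simps)
    thus ?thesis using Qb by simp
  qed
  have bijm: "bij_betw (\<lambda>k. (k * a1) mod n) {..<n} {..<n}" by (rule mul_bij[OF p a1n])
  have const: "\<forall>v<n. b v = b 0" if b: "b \<in> B" and Qb: "Q b = 0" for b
  proof -
    have "D b = 0" using DQ[of b] Qb by simp
    hence z: "\<forall>v\<in>{..<n}. (b v - b (nbr n (int a1) v))\<^sup>2 = 0"
      unfolding D_def by (subst sum_nonneg_eq_0_iff[symmetric]) simp_all
    have st: "b ((v + a1) mod n) = b v" if v: "v < n" for v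
    proof -
      have "(b v - b (nbr n (int a1) v))\<^sup>2 = 0" using z v by blast
      hence "b (nbr n (int a1) v) = b v" by simp
      thus ?thesis by (simp only: nbr_pos[OF n])
    qed
    have k: "b ((k * a1) mod n) = b 0" for k
    proof (induction k)
      case 0 then show ?case by simp
    next
      case (Suc k)
      have "Suc k * a1 = k * a1 + a1" by simp
      hence e: "(Suc k * a1) mod n = ((k * a1) mod n + a1) mod n" by (simp only: mod_add_left_eq)
      have "(k * a1) mod n < n" using n by (rule mod_less_divisor)
      hence "b (((k * a1) mod n + a1) mod n) = b ((k * a1) mod n)" by (rule st)
      then show ?case using e Suc.IH by simp
    qed
    show ?thesis
    proof (intro allI impI)
      fix v assume v: "v < n"
      have "v \<in> (\<lambda>k. (k * a1) mod n) ` {..<n}" using bijm v unfolding bij_betw_def by simp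
      then obtain k where "v = (k * a1) mod n" by blast
      thus "b v = b 0" using k by simp
    qed
  qed
  define g where "g = tent n"
  have vg: "is_vec n g" unfolding is_vec_def g_def tent_def by simp
  obtain c where c: "\<forall>i<n. g i = (\<Sum>b\<in>B. c b * b i)"
    using onb vg unfolding is_onb_def by blast
  have ip: "(\<Sum>i<n. g i * b i) = c b" if b: "b \<in> B" for b
  proof -
    have "(\<Sum>i<n. g i * b i) = (\<Sum>i<n. \<Sum>b'\<in>B. c b' * (b' i * b i))"
      by (rule sum.cong) (auto simp: c sum_distrib_right mult.assoc)
    also have "\<dots> = (\<Sum>b'\<in>B. c b' * (\<Sum>i<n. b' i * b i))"
      by (subst sum.swap) (simp add: sum_distrib_left)
    also have "\<dots> = (\<Sum>b'\<in>B. if b' = b then c b else 0)"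
      by (rule sum.cong) (auto simp: ipB[OF b])
    also have "\<dots> = c b" using finB b by simp
    finally show ?thesis .
  qed
  have normg: "(\<Sum>i<n. (g i)\<^sup>2) = (\<Sum>b\<in>B. (c b)\<^sup>2)"
  proof -
    have "(\<Sum>i<n. (g i)\<^sup>2) = (\<Sum>i<n. \<Sum>b\<in>B. c b * (g i * b i))"
    proof (rule sum.cong)
      fix x assume "x \<in> {..<n}"
      hence x: "x < n" by simp
      have "(\<Sum>b\<in>B. c b * (g x * b x)) = g x * (\<Sum>b\<in>B. c b * b x)" by (simp add: sum_distrib_left mult_ac)
      also have "\<dots> = g x * g x" using c x by simp
      finally show "(g x)\<^sup>2 = (\<Sum>b\<in>B. c b * (g x * b x))" by (simp add: power2_eq_square)
    qed simp
    also have "\<dots> = (\<Sum>b\<in>B. c b * (\<Sum>i<n. g i * b i))"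
      by (subst sum.swap) (simp add: sum_distrib_left)
    also have "\<dots> = (\<Sum>b\<in>B. (c b)\<^sup>2)"
      by (rule sum.cong) (auto simp: ip power2_eq_square)
    finally show ?thesis .
  qed
  have Qg: "Q g = (\<Sum>b\<in>B. (c b)\<^sup>2 * Q b)"
  proof -
    have gn: "g (nbr n e i) = (\<Sum>b\<in>B. c b * b (nbr n e i))" for e i
      using c nbr_lt[OF n] by blast
    have Ng: "4 * g i - Nx n a1 a2 g i = (\<Sum>b\<in>B. c b * Q b * b i)" if i: "i < n" for i
    proof -
      have "Nx n a1 a2 g i = (\<Sum>b\<in>B. c b * Nx n a1 a2 b i)"
        unfolding Nx_def gn by (simp add: sum.distrib algebra_simps)
      also have "\<dots> = (\<Sum>b\<in>B. c b * ((4 - Q b) * b i))"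
        by (rule sum.cong) (auto simp: eigQ i)
      finally have "Nx n a1 a2 g i = (\<Sum>b\<in>B. c b * ((4 - Q b) * b i))" .
      moreover have "4 * g i = (\<Sum>b\<in>B. 4 * (c b * b i))" using c i by (simp add: sum_distrib_left)
      ultimately show ?thesis by (simp add: sum_subtractf[symmetric] algebra_simps)
    qed
    have "Q g = (\<Sum>i<n. g i * (4 * g i - Nx n a1 a2 g i))" by (simp only: Q_def)
    also have "\<dots> = (\<Sum>i<n. \<Sum>b\<in>B. c b * Q b * (g i * b i))"
    proof (rule sum.cong)
      fix i assume "i \<in> {..<n}"
      hence i: "i < n" by simp
      show "g i * (4 * g i - Nx n a1 a2 g i) = (\<Sum>b\<in>B. c b * Q b * (g i * b i))"
        unfolding Ng[OF i] by (simp add: sum_distrib_left mult_ac)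
    qed simp
    also have "\<dots> = (\<Sum>b\<in>B. c b * Q b * (\<Sum>i<n. g i * b i))"
      by (subst sum.swap) (simp add: sum_distrib_left)
    also have "\<dots> = (\<Sum>b\<in>B. (c b)\<^sup>2 * Q b)"
      by (rule sum.cong) (auto simp: ip power2_eq_square)
    finally show ?thesis .
  qed
  have odd: "odd n" using prime_odd_nat[OF p] na a12 by linarith
  define k where "k = n div 2"
  have nk: "n = 2 * k + 1" unfolding k_def using odd by presburger
  have k1: "1 \<le> k" using nk na a12 by linarith
  define G where "G = (\<Sum>i<n. g i)"
  define V where "V = (\<Sum>i<n. (g i)\<^sup>2) - G\<^sup>2 / real n"
  have Vb: "V \<ge> real n ^ 3 / 64"
    unfolding V_def G_def g_def using tent_var[OF k1] nk by simp
  have Vpos: "0 < V" using Vb n by (smt (verit) zero_less_power of_nat_0_less_iff divide_pos_pos)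
  have lipsum: "(\<Sum>v<n. (g v - g (nbr n (int a) v))\<^sup>2) \<le> real n * (real a)\<^sup>2" if a: "a \<le> n" for a
  proof -
    have "(\<Sum>v<n. (g v - g (nbr n (int a) v))\<^sup>2) \<le> (\<Sum>v<n. (real a)\<^sup>2)"
    proof (rule sum_mono)
      fix v assume "v \<in> {..<n}"
      hence v: "v < n" by simp
      have "\<bar>g v - g (nbr n (int a) v)\<bar> \<le> real a"
        unfolding g_def nbr_pos[OF n] by (rule tent_lip[OF v a])
      hence "\<bar>g v - g (nbr n (int a) v)\<bar> \<le> \<bar>real a\<bar>" by simp
      thus "(g v - g (nbr n (int a) v))\<^sup>2 \<le> (real a)\<^sup>2" by (simp only: abs_le_square_iff)
    qed
    thus ?thesis by simp
  qed
  have Qgb: "Q g \<le> real n * ((real a1)\<^sup>2 + (real a2)\<^sup>2)"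
  proof -
    have "Q g = (\<Sum>v<n. (g v - g (nbr n (int a1) v))\<^sup>2) + (\<Sum>v<n. (g v - g (nbr n (int a2) v))\<^sup>2)"
      unfolding Q_def by (rule quad_id[OF n])
    thus ?thesis using lipsum[of a1] lipsum[of a2] a12 na by (simp add: algebra_simps)
  qed
  define B0 where "B0 = {b\<in>B. Q b = 0}"
  have B0c: "(c b)\<^sup>2 = G\<^sup>2 / real n" if b: "b \<in> B0" for b
  proof -
    have bB: "b \<in> B" and Qb: "Q b = 0" using b unfolding B0_def by auto
    have cst: "\<forall>v<n. b v = b 0" by (rule const[OF bB Qb])
    have nb: "real n * (b 0)\<^sup>2 = 1" using normB[OF bB] sum_const2[OF cst cst, of "\<lambda>x y. x\<^sup>2"] by simp
    have "c b = (\<Sum>i<n. g i * b i)" using ip[OF bB] by simp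
    also have "\<dots> = (\<Sum>i<n. g i * b 0)"
    proof (rule sum.cong)
      fix x assume "x \<in> {..<n}"
      hence "x < n" by simp
      hence "b x = b 0" using cst by blast
      thus "g x * b x = g x * b 0" by simp
    qed simp
    also have "\<dots> = b 0 * G" unfolding G_def by (simp add: sum_distrib_left[symmetric] mult.commute)
    finally have "(c b)\<^sup>2 = (b 0)\<^sup>2 * G\<^sup>2" by (simp add: power_mult_distrib)
    thus ?thesis using nb n by (simp add: field_simps)
  qed
  have B0u: "b = b'" if b: "b \<in> B0" and b': "b' \<in> B0" for b b'
  proof (rule ccontr)
    assume ne: "b \<noteq> b'"
    have bB: "b \<in> B" "Q b = 0" and bB': "b' \<in> B" "Q b' = 0" using b b' unfolding B0_def by auto
    have cst: "\<forall>v<n. b v = b 0" by (rule const[OF bB])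
    have cst': "\<forall>v<n. b' v = b' 0" by (rule const[OF bB'])
    have nb: "real n * (b 0)\<^sup>2 = 1" using normB[OF bB(1)] sum_const2[OF cst cst, of "\<lambda>x y. x\<^sup>2"] by simp
    have nb': "real n * (b' 0)\<^sup>2 = 1" using normB[OF bB'(1)] sum_const2[OF cst' cst', of "\<lambda>x y. x\<^sup>2"] by simp
    have "0 = (\<Sum>i<n. b i * b' i)" using orthB[OF bB(1) bB'(1) ne] by simp
    also have "\<dots> = real n * (b 0 * b' 0)" using sum_const2[OF cst cst', of "\<lambda>x y. x * y"] by simp
    finally have "real n * (b 0 * b' 0) = 0" by simp
    hence "b 0 = 0 \<or> b' 0 = 0" using n by simp
    thus False using nb nb' by auto
  qed
  have finB0: "finite B0" using finB unfolding B0_def by simp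
  have B0sum: "(\<Sum>b\<in>B0. (c b)\<^sup>2) \<le> G\<^sup>2 / real n"
  proof (cases "B0 = {}")
    case True
    then show ?thesis by simp
  next
    case False
    then obtain b where b: "b \<in> B0" by blast
    hence "B0 = {b}" using B0u by blast
    thus ?thesis using B0c[OF b] by simp
  qed
  have sub: "B0 \<subseteq> B" unfolding B0_def by auto
  have splitc: "(\<Sum>b\<in>B. (c b)\<^sup>2) = (\<Sum>b\<in>B0. (c b)\<^sup>2) + (\<Sum>b\<in>B - B0. (c b)\<^sup>2)"
    using sum.subset_diff[OF sub finB] by (simp add: add.commute)
  have c1: "(\<Sum>b\<in>B - B0. (c b)\<^sup>2) \<ge> V"
    using splitc B0sum normg unfolding V_def G_def by simp
  have splitq: "(\<Sum>b\<in>B. (c b)\<^sup>2 * Q b) = (\<Sum>b\<in>B0. (c b)\<^sup>2 * Q b) + (\<Sum>b\<in>B - B0. (c b)\<^sup>2 * Q b)"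
    using sum.subset_diff[OF sub finB] by (simp add: add.commute)
  have "(\<Sum>b\<in>B0. (c b)\<^sup>2 * Q b) = 0" by (rule sum.neutral) (simp add: B0_def)
  hence c2: "(\<Sum>b\<in>B - B0. (c b)\<^sup>2 * Q b) = Q g" using splitq Qg by simp
  define r where "r = Q g / V"
  have r0: "0 \<le> r" unfolding r_def using Vpos DQ[of g] by simp
  have "\<exists>b\<in>B - B0. Q b \<le> r"
  proof (rule ccontr)
    assume "\<not> ?thesis"
    hence gt: "\<forall>b\<in>B - B0. r < Q b" by (meson not_le)
    have "(\<Sum>b\<in>B - B0. (c b)\<^sup>2 * (Q b - r)) = Q g - r * (\<Sum>b\<in>B - B0. (c b)\<^sup>2)"
      using c2 by (simp add: algebra_simps sum_subtractf sum_distrib_left)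
    also have "\<dots> \<le> Q g - r * V" using c1 r0 by (simp add: mult_left_mono)
    also have "\<dots> = 0" unfolding r_def using Vpos by simp
    finally have le0: "(\<Sum>b\<in>B - B0. (c b)\<^sup>2 * (Q b - r)) \<le> 0" .
    have nn: "\<And>b. b \<in> B - B0 \<Longrightarrow> 0 \<le> (c b)\<^sup>2 * (Q b - r)" using gt by (simp add: less_imp_le)
    have "(\<Sum>b\<in>B - B0. (c b)\<^sup>2 * (Q b - r)) = 0" using le0 nn by (meson antisym sum_nonneg)
    hence "\<forall>b\<in>B - B0. (c b)\<^sup>2 * (Q b - r) = 0" using nn finB by (subst sum_nonneg_eq_0_iff[symmetric]) auto
    hence "\<forall>b\<in>B - B0. (c b)\<^sup>2 = 0" using gt by auto
    hence "(\<Sum>b\<in>B - B0. (c b)\<^sup>2) = 0" by simp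
    thus False using c1 Vpos by simp
  qed
  then obtain b where bB: "b \<in> B" and bnot: "b \<notin> B0" and Qr: "Q b \<le> r" by blast
  have Qb0: "Q b \<noteq> 0" using bB bnot unfolding B0_def by simp
  have s0: "(\<Sum>v<n. b v) = 0" by (rule sum0[OF bB Qb0])
  have Db: "D b \<le> K / (real n)\<^sup>2"
  proof -
    have "D b \<le> Q b" using DQ by simp
    also have "\<dots> \<le> Q g / V" using Qr unfolding r_def .
    also have "\<dots> \<le> real n * ((real a1)\<^sup>2 + (real a2)\<^sup>2) / (real n ^ 3 / 64)"
      using Qgb Vb Vpos DQ[of g] n by (intro frac_le) auto
    also have "\<dots> = K / (real n)\<^sup>2" unfolding K_def using n by (simp add: field_simps power2_eq_square power3_eq_cube)
    finally show ?thesis .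
  qed
  define m where "m = n div q"
  have mn: "m \<le> n" unfolding m_def by simp
  obtain S where S: "S \<subseteq> {..<n}" "card S = m"
    and muS: "mu b S \<le> 4 * real m * real m * (\<Sum>v<n. (b v - b ((v + a1) mod n))\<^sup>2)"
    using window[OF p a1n s0 normB[OF bB] mn] by blast
  have "(\<Sum>v<n. (b v - b ((v + a1) mod n))\<^sup>2) = D b" unfolding D_def by (simp add: nbr_pos[OF n])
  hence "mu b S \<le> 4 * real m * real m * (K / (real n)\<^sup>2)"
    using muS Db by (smt (verit) mult_left_mono mult_nonneg_nonneg of_nat_0_le_iff)
  also have "\<dots> \<le> 4 * K / (real q)\<^sup>2"
  proof -
    have "m * q \<le> n" unfolding m_def by (rule div_times_less_eq_dividend)
    hence mq: "real m * real q \<le> real n" by (metis of_nat_le_iff of_nat_mult)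
    have K0: "0 \<le> K" unfolding K_def by simp
    have "(real m * real q)\<^sup>2 \<le> (real n)\<^sup>2" using mq by (simp add: power_mono)
    hence "real m * real m * (real q)\<^sup>2 \<le> (real n)\<^sup>2" by (simp add: power2_eq_square mult_ac)
    hence "4 * K * (real m * real m * (real q)\<^sup>2) \<le> 4 * K * (real n)\<^sup>2" using K0 by (simp add: mult_left_mono)
    thus ?thesis using n q by (simp add: field_simps)
  qed
  finally show ?thesis using S bB unfolding m_def K_def by blast
qed



lemma div_lim:
  assumes q: "0 < q"
  shows "((\<lambda>n::nat. real (n div q) / real n) \<longlongrightarrow> 1 / real q) sequentially"
proof (rule tendsto_sandwich[where f="\<lambda>n. 1 / real q - inverse (real n)" and h="\<lambda>n. 1 / real q"])
  show "\<forall>\<^sub>F n in sequentially. 1 / real q - inverse (real n) \<le> real (n div q) / real n"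
  proof (rule eventually_sequentiallyI[of 1])
    fix n :: nat assume n: "1 \<le> n"
    have "n < (n div q + 1) * q" using q by (metis div_less_iff_less_mult less_add_one)
    hence "real n < (real (n div q) + 1) * real q" by (metis of_nat_add of_nat_1 of_nat_less_iff of_nat_mult)
    hence "real n / real q - 1 \<le> real (n div q)" using q by (simp add: field_simps)
    hence "(real n / real q - 1) / real n \<le> real (n div q) / real n"
      by (rule divide_right_mono) simp
    moreover have "(real n / real q - 1) / real n = 1 / real q - inverse (real n)"
      using n q by (simp add: field_simps)
    ultimately show "1 / real q - inverse (real n) \<le> real (n div q) / real n" by simp
  qed
  show "\<forall>\<^sub>F n in sequentially. real (n div q) / real n \<le> 1 / real q"
  proof (rule eventually_sequentiallyI[of 1])
    fix n :: nat assume n: "1 \<le> n"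
    have "n div q * q \<le> n" by (rule div_times_less_eq_dividend)
    hence "real (n div q) * real q \<le> real n" by (metis of_nat_le_iff of_nat_mult)
    thus "real (n div q) / real n \<le> 1 / real q" using n q by (simp add: field_simps)
  qed
  show "((\<lambda>n. 1 / real q - inverse (real n)) \<longlongrightarrow> 1 / real q) sequentially"
    using tendsto_diff[OF tendsto_const lim_inverse_n', of "1 / real q"] by (simp add: inverse_eq_divide)
qed simp

theorem theorem2:
  fixes a1 a2 :: nat and \<A> :: "nat set" and \<B> :: "nat \<Rightarrow> (nat \<Rightarrow> real) set"
  assumes "1 \<le> a1" and "a1 < a2"
    and "infinite \<A>"
    and "\<forall>n\<in>\<A>. prime n \<and> n > 2 * a2"
    and "\<forall>n\<in>\<A>. is_onb n (\<B> n) \<and> (\<forall>b\<in>\<B> n. is_eigvec n (circ_matrix n a1 a2) b)"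
  shows "\<exists>p::real. 0 < p \<and> p < 1 \<and>
           (\<exists>S :: nat \<Rightarrow> nat set. \<exists>\<phi> :: nat \<Rightarrow> nat \<Rightarrow> real.
              (\<forall>n\<in>\<A>. S n \<subseteq> {..<n} \<and> \<phi> n \<in> \<B> n) \<and>
              ((\<lambda>n. real (card (S n)) / real n) \<longlongrightarrow> p) (inf sequentially (principal \<A>)) \<and>
              \<not> ((\<lambda>n. mu (\<phi> n) (S n)) \<longlongrightarrow> p) (inf sequentially (principal \<A>)))"
proof -
  define K where "K = 4 * (64 * (real a1 ^ 2 + real a2 ^ 2))"
  define q :: nat where "q = 512 * (a1 ^ 2 + a2 ^ 2) + 1"
  have Kq: "2 * K \<le> real q" unfolding K_def q_def by simp
  have q0: "0 < q" unfolding q_def by simp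
  have q2: "2 \<le> q" using assms(1) unfolding q_def by (simp add: Suc_le_eq)
  define p where "p = 1 / real q"
  have p0: "0 < p" and p1: "p < 1" unfolding p_def using q0 q2 by auto
  have Kp: "K / (real q)\<^sup>2 \<le> p / 2"
  proof -
    have "K / (real q)\<^sup>2 = K / real q * p" unfolding p_def by (simp add: power2_eq_square)
    also have "\<dots> \<le> (1/2) * p" using Kq q0 p0 by (intro mult_right_mono) (simp_all add: field_simps)
    finally show ?thesis by simp
  qed
  have ex: "\<forall>n\<in>\<A>. \<exists>S \<phi>. S \<subseteq> {..<n} \<and> \<phi> \<in> \<B> n \<and> card S = n div q \<and> mu \<phi> S \<le> K / (real q)\<^sup>2"
  proof
    fix n assume n: "n \<in> \<A>"
    show "\<exists>S \<phi>. S \<subseteq> {..<n} \<and> \<phi> \<in> \<B> n \<and> card S = n div q \<and> mu \<phi> S \<le> K / (real q)\<^sup>2"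
      using per_n[OF assms(1,2) _ _ _ _ q0, of n "\<B> n"] assms(4,5) n unfolding K_def by auto
  qed
  then obtain S where "\<forall>n\<in>\<A>. \<exists>\<phi>. S n \<subseteq> {..<n} \<and> \<phi> \<in> \<B> n \<and> card (S n) = n div q \<and> mu \<phi> (S n) \<le> K / (real q)\<^sup>2"
    by metis
  then obtain \<phi> where P: "\<forall>n\<in>\<A>. S n \<subseteq> {..<n} \<and> \<phi> n \<in> \<B> n \<and> card (S n) = n div q \<and> mu (\<phi> n) (S n) \<le> K / (real q)\<^sup>2"
    by metis
  define F where "F = inf sequentially (principal \<A>)"
  have lim: "((\<lambda>n. real (card (S n)) / real n) \<longlongrightarrow> p) F"
  proof -
    have "((\<lambda>n::nat. real (n div q) / real n) \<longlongrightarrow> p) F"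
      unfolding p_def F_def by (rule tendsto_mono[OF inf_le1 div_lim[OF q0]])
    moreover have ev: "\<forall>\<^sub>F n in F. real (n div q) / real n = real (card (S n)) / real n"
      unfolding F_def eventually_inf_principal using P by auto
    ultimately show ?thesis using tendsto_cong[OF ev] by simp
  qed
  have nlim: "\<not> ((\<lambda>n. mu (\<phi> n) (S n)) \<longlongrightarrow> p) F"
  proof
    assume "((\<lambda>n. mu (\<phi> n) (S n)) \<longlongrightarrow> p) F"
    hence "\<forall>\<^sub>F n in F. p / 2 < mu (\<phi> n) (S n)" using p0 by (intro order_tendstoD(1)) auto
    hence "\<forall>\<^sub>F n in sequentially. n \<in> \<A> \<longrightarrow> p / 2 < mu (\<phi> n) (S n)"
      unfolding F_def eventually_inf_principal .
    then obtain N where N: "\<And>n. N \<le> n \<Longrightarrow> n \<in> \<A> \<longrightarrow> p / 2 < mu (\<phi> n) (S n)"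
      unfolding eventually_sequentially by blast
    obtain n where n: "n \<in> \<A>" "N \<le> n" using assms(3) by (meson infinite_nat_iff_unbounded_le)
    have "p / 2 < mu (\<phi> n) (S n)" using N n by blast
    moreover have "mu (\<phi> n) (S n) \<le> K / (real q)\<^sup>2" using P n(1) by blast
    hence "mu (\<phi> n) (S n) \<le> p / 2" using Kp by linarith
    ultimately show False by simp
  qed
  show ?thesis using p0 p1 P lim nlim unfolding F_def by blast
qed

end
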